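(* Let $q$ be a prime power, let $C\subseteq\mathbb{F}_q^n$ be an $[n,k]_q$ linear code, and let $t\in\mathbb{N}$. Then \[ \log_{q^t} \left(V_{q^t,n,R_t(C)}\right) \geq n-k. \]
   Context: An $[n,k]_q$ code is a $k$-dimensional subspace of $\mathbb{F}_q^n$. For a $t\times n$ matrix $\mathbf{v}$ over $\mathbb{F}_q$ with rows $\overline{v}_1,\dots,\overline{v}_t$, $\mathrm{wt}^{(t)}(\mathbf{v})=\left|\bigcup_{i} \mathrm{supp}(\overline{v}_i)\right|$ and $d^{(t)}(\mathbf{u},\mathbf{v})=\mathrm{wt}^{(t)}(\mathbf{u}-\mathbf{v})$. $C^t$ is the set of $t\times n$ matrices over $\mathbb{F}_q$ all of whose rows lie in $C$, and the $t$-th generalized covering radius $R_t(C)$ is the smallest integer $\rho$ such that for every $\mathbf{v}\in\mathbb{F}_q^{t\times n}$ some $\mathbf{c}\in C^t$ has $d^{(t)}(\mathbf{v},\mathbf{c})\le\rho$. $V_{Q,n,r}=\sum_{i=0}^r\binom{n}{i}(Q-1)^i$. *)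

theory Defs
  imports "HOL-Analysis.Cartesian_Space"
begin

text \<open>A t x n matrix over F_q is represented as a function from row indices (nat, only
rows i < t matter) to vectors in F_q^n = 'a^'n.\<close>

definition wt_t :: "nat \<Rightarrow> (nat \<Rightarrow> 'a::field ^ 'n) \<Rightarrow> nat" where
  "wt_t t v = card (\<Union>i\<in>{..<t}. {j. v i $ j \<noteq> 0})"

definition d_t :: "nat \<Rightarrow> (nat \<Rightarrow> 'a::field ^ 'n) \<Rightarrow> (nat \<Rightarrow> 'a ^ 'n) \<Rightarrow> nat" where
  "d_t t u v = wt_t t (\<lambda>i. u i - v i)"

definition code_pow :: "nat \<Rightarrow> ('a::field ^ 'n) set \<Rightarrow> (nat \<Rightarrow> 'a ^ 'n) set" where
  "code_pow t C = {c. \<forall>i<t. c i \<in> C}"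

definition gen_cov_radius :: "nat \<Rightarrow> ('a::field ^ 'n) set \<Rightarrow> nat" where
  "gen_cov_radius t C = (LEAST \<rho>. \<forall>v. \<exists>c\<in>code_pow t C. d_t t v c \<le> \<rho>)"

definition ball_vol :: "nat \<Rightarrow> nat \<Rightarrow> nat \<Rightarrow> nat" where
  "ball_vol Q n r = (\<Sum>i=0..r. (n choose i) * (Q - 1) ^ i)"

end

theory Submission
  imports Defs
begin

lemma ball_count:
  fixes w :: "'n::finite \<Rightarrow> 'b"
  assumes fA: "finite A" and wA: "\<forall>j. w j \<in> A"
  shows "card {f. (\<forall>j. f j \<in> A) \<and> card {j. f j \<noteq> w j} \<le> r}
     \<le> (\<Sum>i=0..r. (CARD('n) choose i) * (card A - 1)^i)"
proof -
  define F where "F i = {f. (\<forall>j. f j \<in> A) \<and> card {j. f j \<noteq> w j} = i}" for i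
  define G where "G i = Sigma {S::'n set. card S = i} (\<lambda>S. PiE S (\<lambda>j. A - {w j}))" for i
  define h where "h = (\<lambda>(S::'n set, g::'n\<Rightarrow>'b). \<lambda>j. if j\<in>S then g j else w j)"
  have eq: "{f. (\<forall>j. f j \<in> A) \<and> card {j. f j \<noteq> w j} \<le> r} = (\<Union>i\<in>{0..r}. F i)"
    unfolding F_def by auto
  have finG: "finite (G i)" for i
    unfolding G_def using fA by (intro finite_SigmaI finite_PiE) auto
  have sub: "F i \<subseteq> h ` G i" for i
  proof
    fix f assume f: "f \<in> F i"
    let ?S = "{j. f j \<noteq> w j}"
    have "(?S, restrict f ?S) \<in> G i" using f unfolding F_def G_def by auto
    moreover have "f = h (?S, restrict f ?S)" unfolding h_def by auto
    ultimately show "f \<in> h ` G i" by blast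
  qed
  have cG: "card (G i) = (CARD('n) choose i) * (card A - 1)^i" for i
  proof -
    have "card (G i) = (\<Sum>S\<in>{S::'n set. card S = i}. card (PiE S (\<lambda>j. A - {w j})))"
      unfolding G_def by (rule card_SigmaI) (auto intro!: finite_PiE simp: fA)
    also have "\<dots> = (\<Sum>S\<in>{S::'n set. card S = i}. (card A - 1)^i)"
    proof (rule sum.cong)
      fix S :: "'n set" assume "S \<in> {S. card S = i}"
      then have "card (PiE S (\<lambda>j. A - {w j})) = (\<Prod>j\<in>S. card A - 1)"
        by (subst card_PiE) (auto simp: card_Diff_singleton fA wA)
      then show "card (PiE S (\<lambda>j. A - {w j})) = (card A - 1)^i"
        using \<open>S \<in> _\<close> by simp
    qed simp
    also have "\<dots> = card {S::'n set. card S = i} * (card A - 1)^i" by simp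
    also have "card {S::'n set. card S = i} = CARD('n) choose i"
      using n_subsets[of "UNIV::'n set" i] by simp
    finally show ?thesis .
  qed
  have "card (F i) \<le> (CARD('n) choose i) * (card A - 1)^i" for i
    using card_mono[OF finite_imageI[OF finG] sub[of i]] card_image_le[OF finG, of h i] cG[of i] by linarith
  then have "(\<Sum>i=0..r. card (F i)) \<le> (\<Sum>i=0..r. (CARD('n) choose i) * (card A - 1)^i)"
    by (intro sum_mono) auto
  then show ?thesis unfolding eq
    using card_UN_le[of "{0..r}" F] by simp
qed

lemma card_subspace_le:
  fixes C :: "('a::{field,finite} ^ 'n) set"
  assumes "vec.subspace C"
  shows "card C \<le> CARD('a) ^ vec.dim C"
proof -
  obtain B where B: "B \<subseteq> C" "vec.independent B" "C \<subseteq> vec.span B" "card B = vec.dim C"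
    by (rule vec.basis_exists)
  have fB: "finite B" by simp
  have "C = vec.span B" using B assms vec.span_subspace by blast
  also have "\<dots> = range (\<lambda>u. \<Sum>v\<in>B. u v *s v)" by (rule vec.span_finite[OF fB])
  also have "\<dots> = (\<lambda>u. \<Sum>v\<in>B. u v *s v) ` PiE B (\<lambda>_. UNIV)"
  proof (rule equalityI)
    show "range (\<lambda>u. \<Sum>v\<in>B. u v *s v) \<subseteq> (\<lambda>u. \<Sum>v\<in>B. u v *s v) ` PiE B (\<lambda>_. UNIV)"
    proof
      fix x assume "x \<in> range (\<lambda>u. \<Sum>v\<in>B. u v *s v)"
      then obtain u where x: "x = (\<Sum>v\<in>B. u v *s v)" by blast
      have "x = (\<Sum>v\<in>B. restrict u B v *s v)" unfolding x by (rule sum.cong) auto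
      moreover have "restrict u B \<in> PiE B (\<lambda>_. UNIV)" by auto
      ultimately show "x \<in> (\<lambda>u. \<Sum>v\<in>B. u v *s v) ` PiE B (\<lambda>_. UNIV)" by blast
    qed
  qed auto
  finally have "card C \<le> card (PiE B (\<lambda>_. UNIV::'a set))"
    using card_image_le[of "PiE B (\<lambda>_. UNIV::'a set)"] by (simp add: finite_PiE)
  also have "\<dots> = CARD('a) ^ card B" by (simp add: card_PiE fB)
  finally show ?thesis using B by simp
qed

theorem lemma7:
  fixes C :: "('a::{field,finite} ^ 'n) set" and k t :: nat
  assumes "vec.subspace C" and "vec.dim C = k" and "t \<ge> 1"
  shows "log (real (CARD('a) ^ t))
           (real (ball_vol (CARD('a) ^ t) CARD('n) (gen_cov_radius t C)))
         \<ge> real CARD('n) - real k"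
proof -
  define q where "q = CARD('a)"
  define n where "n = CARD('n)"
  define R where "R = gen_cov_radius t C"
  define V where "V = ball_vol (q ^ t) n R"
  define A where "A = PiE {..<t} (\<lambda>_. UNIV::'a set)"
  define W where "W = {f :: 'n \<Rightarrow> nat \<Rightarrow> 'a. \<forall>j. f j \<in> A}"
  define col where "col = (\<lambda>(c::nat \<Rightarrow> 'a^'n) j. restrict (\<lambda>i. c i $ j) {..<t})"
  define mat where "mat = (\<lambda>(f::'n \<Rightarrow> nat \<Rightarrow> 'a) i. (\<chi> j. f j i))"
  define Ball where "Ball = (\<lambda>w::'n \<Rightarrow> nat \<Rightarrow> 'a. {f. (\<forall>j. f j \<in> A) \<and> card {j. f j \<noteq> w j} \<le> R})"
  define Cw where "Cw = col ` PiE {..<t} (\<lambda>_. C)"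
  have q2: "q \<ge> 2"
  proof -
    have "card {0::'a, 1} \<le> q" unfolding q_def by (rule card_mono) auto
    then show ?thesis by simp
  qed
  have fA: "finite A" unfolding A_def by (simp add: finite_PiE)
  have cA: "card A = q ^ t" unfolding A_def q_def by (simp add: card_PiE)
  have cW: "card W = (q ^ t) ^ n"
  proof -
    have "W = PiE UNIV (\<lambda>_::'n. A)" unfolding W_def by (auto simp: PiE_UNIV_domain)
    then show ?thesis by (simp add: card_PiE cA n_def)
  qed
  have cov: "\<forall>v. \<exists>c\<in>code_pow t C. d_t t v c \<le> R"
  proof -
    have "\<forall>v. \<exists>c\<in>code_pow t C. d_t t v c \<le> n"
    proof
      fix v :: "nat \<Rightarrow> 'a^'n"
      have "(\<lambda>_. 0) \<in> code_pow t C" unfolding code_pow_def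
        using assms(1) vec.subspace_0 by auto
      moreover have "d_t t v (\<lambda>_. 0) \<le> n" unfolding d_t_def wt_t_def n_def
        by (rule card_mono) auto
      ultimately show "\<exists>c\<in>code_pow t C. d_t t v c \<le> n" by blast
    qed
    then show ?thesis unfolding R_def gen_cov_radius_def by (rule LeastI)
  qed
  have dist: "d_t t (mat f) c = card {j. f j \<noteq> col c j}" if f: "f \<in> W" for f c
  proof -
    have "(\<Union>i\<in>{..<t}. {j. (mat f i - c i) $ j \<noteq> 0}) = {j. f j \<noteq> col c j}"
    proof (rule set_eqI)
      fix j
      have fj: "f j \<in> A" using f unfolding W_def by auto
      have "f j \<noteq> col c j \<longleftrightarrow> (\<exists>i<t. f j i \<noteq> c i $ j)"
      proof
        assume "f j \<noteq> col c j"
        then obtain i where "f j i \<noteq> col c j i" by auto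
        moreover have "i < t" using fj calculation unfolding A_def col_def
          by (metis PiE_arb lessThan_iff restrict_apply)
        ultimately show "\<exists>i<t. f j i \<noteq> c i $ j" unfolding col_def by auto
      qed (auto simp: col_def)
      then show "j \<in> (\<Union>i\<in>{..<t}. {j. (mat f i - c i) $ j \<noteq> 0}) \<longleftrightarrow> j \<in> {j. f j \<noteq> col c j}"
        unfolding mat_def by auto
    qed
    then show ?thesis unfolding d_t_def wt_t_def by simp
  qed
  have colr: "col c = col (restrict c {..<t})" for c unfolding col_def by (intro ext) (auto simp: restrict_def)
  have cover: "W \<subseteq> (\<Union>w\<in>Cw. Ball w)"
  proof
    fix f assume f: "f \<in> W"
    obtain c where c: "c \<in> code_pow t C" "d_t t (mat f) c \<le> R" using cov by blast
    have "restrict c {..<t} \<in> PiE {..<t} (\<lambda>_. C)" using c(1) unfolding code_pow_def by auto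
    then have "col c \<in> Cw" unfolding Cw_def using colr by blast
    moreover have "f \<in> Ball (col c)" using c(2) dist[OF f] f unfolding Ball_def W_def by auto
    ultimately show "f \<in> (\<Union>w\<in>Cw. Ball w)" by blast
  qed
  have fCw: "finite Cw" unfolding Cw_def by (simp add: finite_PiE)
  have cCw: "card Cw \<le> q ^ (k * t)"
  proof -
    have "card Cw \<le> card (PiE {..<t} (\<lambda>_. C))" unfolding Cw_def
      by (rule card_image_le) (simp add: finite_PiE)
    also have "\<dots> = card C ^ t" by (simp add: card_PiE)
    also have "\<dots> \<le> (q ^ k) ^ t"
      using card_subspace_le[OF assms(1)] assms(2) unfolding q_def by (simp add: power_mono)
    finally show ?thesis by (simp add: power_mult)
  qed
  have cBall: "card (Ball w) \<le> V" if wCw: "w \<in> Cw" for w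
  proof -
    obtain c where wc: "w = col c" using wCw unfolding Cw_def by blast
    have "\<forall>j. w j \<in> A" unfolding wc col_def A_def by (intro allI PiE_I) auto
    from ball_count[OF fA this, of R] show ?thesis unfolding Ball_def V_def ball_vol_def n_def cA .
  qed
  have "(q ^ t) ^ n \<le> card (\<Union>w\<in>Cw. Ball w)"
  proof -
    have fW: "finite W" using cW q2 by (metis card.infinite nat_power_eq_Suc_0_iff not_numeral_le_zero power_eq_0_iff zero_neq_one)
    have "(\<Union>w\<in>Cw. Ball w) \<subseteq> W" unfolding Ball_def W_def by auto
    then have "finite (\<Union>w\<in>Cw. Ball w)" using fW finite_subset by blast
    then show ?thesis unfolding cW[symmetric] using cover card_mono by blast
  qed
  also have "\<dots> \<le> (\<Sum>w\<in>Cw. card (Ball w))" by (rule card_UN_le[OF fCw])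
  also have "\<dots> \<le> (\<Sum>w\<in>Cw. V)" by (rule sum_mono) (use cBall in auto)
  also have "\<dots> = card Cw * V" by simp
  also have "\<dots> \<le> (q ^ t) ^ k * V" using cCw by (simp add: power_mult[symmetric] mult.commute)
  finally have main: "(q ^ t) ^ n \<le> (q ^ t) ^ k * V" .
  define Q where "Q = real (q ^ t)"
  have Q1: "Q > 1" unfolding Q_def using q2 assms(3)
    by (metis le_less_trans less_one nat_neq_iff not_le numeral_le_one_iff of_nat_1 of_nat_less_iff one_less_power semiring_norm(69))
  have V0: "V > 0" unfolding V_def ball_vol_def
    by (rule ordered_comm_monoid_add_class.sum_pos2[of _ 0]) auto
  have mainr: "Q ^ n \<le> Q ^ k * real V" unfolding Q_def
    using main by (metis of_nat_le_iff of_nat_mult of_nat_power)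
  have "real n = log Q (Q ^ n)" using Q1 by (simp add: log_nat_power)
  also have "\<dots> \<le> log Q (Q ^ k * real V)"
    using mainr Q1 V0 by (subst log_le_cancel_iff) auto
  also have "\<dots> = real k + log Q (real V)"
    using Q1 V0 by (simp add: log_mult log_nat_power)
  finally show ?thesis unfolding Q_def V_def q_def n_def R_def by simp
qed

end
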